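(* Let $\hat{\mathcal D}$ be a marked DAG over $X$, $\kappa>0$, $q\in\mathcal Q_{\mathcal D}$, $c\in\mathbb R_+^X$, $p=\mathcal A(q,c)$ with associated values $\hat c_v$ ($v\in V$), and $Q=\Lambda(q)$. Then $$\sum_{uv\in A}\eta_{uv}Q_{uv}\hat c_v\le\big(\Delta_0(\mathcal D)+\Delta_I(\hat{\mathcal D})\big)\sum_{x\in X}c_xQ_x.$$
   Context: Let $X$ be a finite set. A DAG over $X$ is a finite directed acyclic graph $\mathcal D=(V,A)$ with $X\subseteq V$, a single source $r$, whose set of sinks is exactly $X$. A flow is $F\in\mathbb R_+^A$ with $\sum_{v:uv\in A}F_{uv}=\sum_{v:vu\in A}F_{vu}$ for $u\in V\setminus(X\cup\{r\})$; $F_u:=\sum_{v:uv\in A}F_{uv}$ for $u\notin X$, $F_x:=\sum_{u:ux\in A}F_{ux}$ for $x\in X$; unit flows have $F_r=1$. $\mathcal P_{\mathcal D}$ is the set of directed paths from $r$ to a sink. A marked DAG is $(\mathcal D,\omega,\theta)$ with $\omega\in\mathbb R_{>0}^A$, $\omega_{uv}>\omega_{vw}$ whenever $uv,vw\in A$, and $\theta\in\mathbb R_{>0}^A$ with $\sum_{v:uv\in A}\theta_{uv}=1$ for $u\in V\setminus X$. $\theta(\gamma):=\prod_{uv\in\gamma}\theta_{uv}$; $\Delta_0(\mathcal D)$ is the maximal number of arcs of a path in $\mathcal P_{\mathcal D}$, $\Delta_I(\hat{\mathcal D}):=\max_{\gamma\in\mathcal P_{\mathcal D}}\log(1/\theta(\gamma))$.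 Put $\eta_{uv}:=1+\log(1/\theta_{uv})$, $\delta_{uv}:=\theta_{uv}/\eta_{uv}$. $\mathcal Q_{\mathcal D}:=\{p\in\mathbb R_+^A:\sum_{v:uv\in A}p_{uv}=1\ \forall u\in V\setminus X\}$; $q^{(u)}:=(q_{uv})_{v:uv\in A}$; $\mathcal Q^{(u)}$ is the probability simplex on $\{v:uv\in A\}$; $\mathbb D^{(u)}(p\|p'):=\frac1\kappa\sum_{v:uv\in A}\frac{\omega_{uv}}{\eta_{uv}}\big[(p_v+\delta_{uv})\log\frac{p_v+\delta_{uv}}{p'_v+\delta_{uv}}+p'_v-p_v\big]$. The step map $\mathcal A(q,c)$ outputs $p\in\mathcal Q_{\mathcal D}$: set $\hat c_x:=c_x$ for $x\in X$; process $u\in V\setminus X$ so that each vertex comes after all its out-neighbours, setting $p^{(u)}:=\arg\min_{p'\in\mathcal Q^{(u)}}\{\mathbb D^{(u)}(p'\|q^{(u)})+\sum_vp'_v\hat c_v\}$ and $\hat c_u:=\sum_vp^{(u)}_v\hat c_v$. $\Lambda(q)$ is the unique unit flow $F$ with $F_{uv}=F_uq_{uv}$ for all $uv\in A$. *)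

theory Defs
  imports Complex_Main
begin

definition out_nbrs :: "('v \<times> 'v) set \<Rightarrow> 'v \<Rightarrow> 'v set" where
  "out_nbrs A u = {v. (u, v) \<in> A}"

definition in_nbrs :: "('v \<times> 'v) set \<Rightarrow> 'v \<Rightarrow> 'v set" where
  "in_nbrs A u = {w. (w, u) \<in> A}"

definition is_dag :: "'v set \<Rightarrow> ('v \<times> 'v) set \<Rightarrow> 'v set \<Rightarrow> 'v \<Rightarrow> bool" where
  "is_dag V A X r \<longleftrightarrow> finite V \<and> A \<subseteq> V \<times> V \<and> X \<subseteq> V \<and> r \<in> V \<and> acyclic A
     \<and> {v \<in> V. \<forall>u. (u, v) \<notin> A} = {r}
     \<and> {v \<in> V. \<forall>w. (v, w) \<notin> A} = X"

definition marked_dag ::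
  "'v set \<Rightarrow> ('v \<times> 'v) set \<Rightarrow> 'v set \<Rightarrow> 'v \<Rightarrow> ('v \<times> 'v \<Rightarrow> real) \<Rightarrow> ('v \<times> 'v \<Rightarrow> real) \<Rightarrow> bool" where
  "marked_dag V A X r \<omega> \<theta> \<longleftrightarrow> is_dag V A X r
     \<and> (\<forall>e\<in>A. \<omega> e > 0)
     \<and> (\<forall>u v w. (u, v) \<in> A \<longrightarrow> (v, w) \<in> A \<longrightarrow> \<omega> (u, v) > \<omega> (v, w))
     \<and> (\<forall>e\<in>A. \<theta> e > 0)
     \<and> (\<forall>u\<in>V - X. (\<Sum>v\<in>out_nbrs A u. \<theta> (u, v)) = 1)"

definition flow_val :: "('v \<times> 'v) set \<Rightarrow> 'v set \<Rightarrow> ('v \<times> 'v \<Rightarrow> real) \<Rightarrow> 'v \<Rightarrow> real" where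
  "flow_val A X F u =
     (if u \<in> X then (\<Sum>w\<in>in_nbrs A u. F (w, u)) else (\<Sum>v\<in>out_nbrs A u. F (u, v)))"

definition is_flow :: "'v set \<Rightarrow> ('v \<times> 'v) set \<Rightarrow> 'v set \<Rightarrow> 'v \<Rightarrow> ('v \<times> 'v \<Rightarrow> real) \<Rightarrow> bool" where
  "is_flow V A X r F \<longleftrightarrow> (\<forall>e\<in>A. F e \<ge> 0)
     \<and> (\<forall>u\<in>V - (X \<union> {r}). (\<Sum>v\<in>out_nbrs A u. F (u, v)) = (\<Sum>w\<in>in_nbrs A u. F (w, u)))"

definition is_unit_flow :: "'v set \<Rightarrow> ('v \<times> 'v) set \<Rightarrow> 'v set \<Rightarrow> 'v \<Rightarrow> ('v \<times> 'v \<Rightarrow> real) \<Rightarrow> bool" where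
  "is_unit_flow V A X r F \<longleftrightarrow> is_flow V A X r F \<and> flow_val A X F r = 1"

definition is_Lambda :: "'v set \<Rightarrow> ('v \<times> 'v) set \<Rightarrow> 'v set \<Rightarrow> 'v \<Rightarrow> ('v \<times> 'v \<Rightarrow> real)
    \<Rightarrow> ('v \<times> 'v \<Rightarrow> real) \<Rightarrow> bool" where
  "is_Lambda V A X r q F \<longleftrightarrow> is_unit_flow V A X r F
     \<and> (\<forall>u v. (u, v) \<in> A \<longrightarrow> F (u, v) = flow_val A X F u * q (u, v))"

definition QD :: "'v set \<Rightarrow> ('v \<times> 'v) set \<Rightarrow> 'v set \<Rightarrow> ('v \<times> 'v \<Rightarrow> real) set" where
  "QD V A X = {p. (\<forall>e\<in>A. p e \<ge> 0) \<and> (\<forall>u\<in>V - X. (\<Sum>v\<in>out_nbrs A u. p (u, v)) = 1)}"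

definition rpaths :: "('v \<times> 'v) set \<Rightarrow> 'v set \<Rightarrow> 'v \<Rightarrow> 'v list set" where
  "rpaths A X r = {\<gamma>. \<gamma> \<noteq> [] \<and> hd \<gamma> = r \<and> last \<gamma> \<in> X
      \<and> (\<forall>i < length \<gamma> - 1. (\<gamma> ! i, \<gamma> ! Suc i) \<in> A)}"

definition path_theta :: "('v \<times> 'v \<Rightarrow> real) \<Rightarrow> 'v list \<Rightarrow> real" where
  "path_theta \<theta> \<gamma> = (\<Prod>i < length \<gamma> - 1. \<theta> (\<gamma> ! i, \<gamma> ! Suc i))"

definition Delta0 :: "('v \<times> 'v) set \<Rightarrow> 'v set \<Rightarrow> 'v \<Rightarrow> nat" where
  "Delta0 A X r = Max ((\<lambda>\<gamma>. length \<gamma> - 1) ` rpaths A X r)"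

definition DeltaI :: "('v \<times> 'v) set \<Rightarrow> 'v set \<Rightarrow> 'v \<Rightarrow> ('v \<times> 'v \<Rightarrow> real) \<Rightarrow> real" where
  "DeltaI A X r \<theta> = Max ((\<lambda>\<gamma>. ln (1 / path_theta \<theta> \<gamma>)) ` rpaths A X r)"

definition eta :: "('v \<times> 'v \<Rightarrow> real) \<Rightarrow> 'v \<times> 'v \<Rightarrow> real" where
  "eta \<theta> e = 1 + ln (1 / \<theta> e)"

definition delta :: "('v \<times> 'v \<Rightarrow> real) \<Rightarrow> 'v \<times> 'v \<Rightarrow> real" where
  "delta \<theta> e = \<theta> e / eta \<theta> e"

text \<open>Simplex on the out-neighbours of u (values outside out_nbrs are irrelevant).\<close>
definition simplex_at :: "('v \<times> 'v) set \<Rightarrow> 'v \<Rightarrow> ('v \<Rightarrow> real) set" where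
  "simplex_at A u = {p. (\<forall>v\<in>out_nbrs A u. p v \<ge> 0) \<and> (\<Sum>v\<in>out_nbrs A u. p v) = 1}"

definition Dloc :: "real \<Rightarrow> ('v \<times> 'v \<Rightarrow> real) \<Rightarrow> ('v \<times> 'v \<Rightarrow> real) \<Rightarrow> ('v \<times> 'v) set \<Rightarrow> 'v
    \<Rightarrow> ('v \<Rightarrow> real) \<Rightarrow> ('v \<Rightarrow> real) \<Rightarrow> real" where
  "Dloc \<kappa> \<omega> \<theta> A u p p' = (1 / \<kappa>) * (\<Sum>v\<in>out_nbrs A u.
      \<omega> (u, v) / eta \<theta> (u, v) *
      ((p v + delta \<theta> (u, v)) * ln ((p v + delta \<theta> (u, v)) / (p' v + delta \<theta> (u, v))) + p' v - p v))"

text \<open>(p, ch) is the output p = A(q,c) of the step map together with the associated values ch = c-hat: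
  ch_x = c_x on X, and for u in V - X, p^(u) is the argmin over the simplex of
  D^(u)(p' || q^(u)) + sum_v p'_v ch_v, and ch_u = sum_v p^(u)_v ch_v.
  (The processing order only ensures ch_v is available for the out-neighbours; the resulting
  values are the ones characterised here.)\<close>
definition step_map_rel :: "'v set \<Rightarrow> ('v \<times> 'v) set \<Rightarrow> 'v set \<Rightarrow> real \<Rightarrow> ('v \<times> 'v \<Rightarrow> real)
    \<Rightarrow> ('v \<times> 'v \<Rightarrow> real) \<Rightarrow> ('v \<times> 'v \<Rightarrow> real) \<Rightarrow> ('v \<Rightarrow> real)
    \<Rightarrow> ('v \<times> 'v \<Rightarrow> real) \<Rightarrow> ('v \<Rightarrow> real) \<Rightarrow> bool" where
  "step_map_rel V A X \<kappa> \<omega> \<theta> q c p ch \<longleftrightarrow>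
     (\<forall>x\<in>X. ch x = c x)
     \<and> (\<forall>u\<in>V - X.
          (\<lambda>v. p (u, v)) \<in> simplex_at A u
        \<and> (\<forall>p'\<in>simplex_at A u.
             Dloc \<kappa> \<omega> \<theta> A u (\<lambda>v. p (u, v)) (\<lambda>v. q (u, v)) + (\<Sum>v\<in>out_nbrs A u. p (u, v) * ch v)
             \<le> Dloc \<kappa> \<omega> \<theta> A u p' (\<lambda>v. q (u, v)) + (\<Sum>v\<in>out_nbrs A u. p' v * ch v))
        \<and> ch u = (\<Sum>v\<in>out_nbrs A u. p (u, v) * ch v))"

end

theory Submission
  imports Defs
begin

definition apath :: "('v \<times> 'v) set \<Rightarrow> 'v list \<Rightarrow> bool" where
  "apath A \<gamma> \<longleftrightarrow> \<gamma> \<noteq> [] \<and> (\<forall>i < length \<gamma> - 1. (\<gamma> ! i, \<gamma> ! Suc i) \<in> A)"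

definition wt :: "('v \<times> 'v \<Rightarrow> real) \<Rightarrow> 'v list \<Rightarrow> real" where
  "wt h \<gamma> = (\<Sum>i < length \<gamma> - 1. h (\<gamma> ! i, \<gamma> ! Suc i))"

lemma apath_trancl:
  assumes "apath A \<gamma>" "i < j" "j < length \<gamma>"
  shows "(\<gamma> ! i, \<gamma> ! j) \<in> A\<^sup>+"
  using assms(2,3)
proof (induction j)
  case 0 then show ?case by simp
next
  case (Suc j)
  have a: "(\<gamma> ! j, \<gamma> ! Suc j) \<in> A" using assms(1) Suc.prems unfolding apath_def by auto
  show ?case
  proof (cases "i = j")
    case True then show ?thesis using a by auto
  next
    case False
    then have "(\<gamma> ! i, \<gamma> ! j) \<in> A\<^sup>+" using Suc by auto
    then show ?thesis using a by (meson trancl.trancl_into_trancl)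
  qed
qed

lemma apath_distinct:
  assumes "acyclic A" "apath A \<gamma>"
  shows "distinct \<gamma>"
proof -
  have "\<gamma> ! i \<noteq> \<gamma> ! j" if "i < j" "j < length \<gamma>" for i j
    using apath_trancl[OF assms(2) that] assms(1) unfolding acyclic_def by auto
  then show ?thesis unfolding distinct_conv_nth by (metis linorder_neq_iff)
qed

lemma apath_set:
  assumes "A \<subseteq> V \<times> V" "hd \<gamma> \<in> V" "apath A \<gamma>"
  shows "set \<gamma> \<subseteq> V"
proof
  fix x assume "x \<in> set \<gamma>"
  then obtain i where i: "i < length \<gamma>" "\<gamma> ! i = x" by (auto simp: in_set_conv_nth)
  show "x \<in> V"
  proof (cases "i < length \<gamma> - 1")
    case True
    then have "(\<gamma> ! i, \<gamma> ! Suc i) \<in> A" using assms(3) unfolding apath_def by auto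
    then show ?thesis using assms(1) i by auto
  next
    case False
    show ?thesis
    proof (cases i)
      case 0 then show ?thesis using i assms(2,3) by (simp add: apath_def hd_conv_nth)
    next
      case (Suc k)
      then have "(\<gamma> ! k, \<gamma> ! Suc k) \<in> A" using assms(3) i unfolding apath_def by auto
      then show ?thesis using assms(1) i Suc by auto
    qed
  qed
qed

lemma apath_finite:
  assumes "finite V" "A \<subseteq> V \<times> V" "acyclic A"
  shows "finite {\<gamma>. apath A \<gamma> \<and> hd \<gamma> \<in> V \<and> P \<gamma>}"
proof (rule finite_subset[OF _ finite_lists_length_le[OF assms(1), of "card V"]])
  show "{\<gamma>. apath A \<gamma> \<and> hd \<gamma> \<in> V \<and> P \<gamma>} \<subseteq> {xs. set xs \<subseteq> V \<and> length xs \<le> card V}"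
  proof
    fix \<gamma> assume "\<gamma> \<in> {\<gamma>. apath A \<gamma> \<and> hd \<gamma> \<in> V \<and> P \<gamma>}"
    then have h: "apath A \<gamma>" "hd \<gamma> \<in> V" by auto
    have s: "set \<gamma> \<subseteq> V" using apath_set[OF assms(2) h(2,1)] .
    have "distinct \<gamma>" using apath_distinct[OF assms(3) h(1)] .
    then have "length \<gamma> = card (set \<gamma>)" by (simp add: distinct_card)
    also have "\<dots> \<le> card V" using s assms(1) by (simp add: card_mono)
    finally show "\<gamma> \<in> {xs. set xs \<subseteq> V \<and> length xs \<le> card V}" using s by simp
  qed
qed

lemma apath_snoc:
  assumes "apath A \<gamma>" "(last \<gamma>, v) \<in> A"
  shows "apath A (\<gamma> @ [v])"
  unfolding apath_def
proof (intro conjI allI impI)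
  show "\<gamma> @ [v] \<noteq> []" by simp
  fix i assume "i < length (\<gamma> @ [v]) - 1"
  then have i: "i < length \<gamma>" by simp
  show "((\<gamma> @ [v]) ! i, (\<gamma> @ [v]) ! Suc i) \<in> A"
  proof (cases "Suc i < length \<gamma>")
    case True then show ?thesis using assms(1) i by (simp add: apath_def nth_append)
  next
    case False
    then have "i = length \<gamma> - 1" "Suc i = length \<gamma>" using i by auto
    then show ?thesis using assms i by (simp add: nth_append last_conv_nth apath_def)
  qed
qed

lemma wt_snoc:
  assumes "\<gamma> \<noteq> []"
  shows "wt h (\<gamma> @ [v]) = wt h \<gamma> + h (last \<gamma>, v)"
proof -
  have l: "length (\<gamma> @ [v]) - 1 = Suc (length \<gamma> - 1)" using assms by simp
  have "wt h (\<gamma> @ [v]) = (\<Sum>i < length \<gamma> - 1. h ((\<gamma>@[v]) ! i, (\<gamma>@[v]) ! Suc i)) + h ((\<gamma>@[v]) ! (length \<gamma> - 1), (\<gamma>@[v]) ! Suc (length \<gamma> - 1))"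
    unfolding wt_def l by simp
  also have "(\<Sum>i < length \<gamma> - 1. h ((\<gamma>@[v]) ! i, (\<gamma>@[v]) ! Suc i)) = wt h \<gamma>"
    unfolding wt_def by (rule sum.cong) (auto simp: nth_append)
  also have "(\<gamma>@[v]) ! (length \<gamma> - 1) = last \<gamma>" using assms by (simp add: nth_append last_conv_nth)
  also have "(\<gamma>@[v]) ! Suc (length \<gamma> - 1) = v" using assms by (simp add: nth_append)
  finally show ?thesis .
qed

lemma xlog_ge: assumes "(a::real) > 0" "b > 0" shows "a * ln (a / b) + b - a \<ge> 0"
proof -
  have "ln (b / a) \<le> b / a - 1" using assms by (intro ln_le_minus_one) simp
  then have "a * ln (b/a) \<le> a * (b/a - 1)" using assms by (intro mult_left_mono) auto
  moreover have "ln (a/b) = - ln (b/a)" using assms by (simp add: ln_div)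
  moreover have "a * (b/a - 1) = b - a" using assms by (simp add: field_simps)
  ultimately show ?thesis by simp
qed


theorem lemma4p11:
  fixes V X :: "'v set" and A :: "('v \<times> 'v) set" and r :: 'v
    and \<omega> \<theta> q p Q :: "'v \<times> 'v \<Rightarrow> real" and c ch :: "'v \<Rightarrow> real" and \<kappa> :: real
  assumes "marked_dag V A X r \<omega> \<theta>"
    and "\<kappa> > 0"
    and "q \<in> QD V A X"
    and "\<forall>x\<in>X. c x \<ge> 0"
    and "step_map_rel V A X \<kappa> \<omega> \<theta> q c p ch"
    and "is_Lambda V A X r q Q"
  shows "(\<Sum>e\<in>A. eta \<theta> e * Q e * ch (snd e))
         \<le> (real (Delta0 A X r) + DeltaI A X r \<theta>) * (\<Sum>x\<in>X. c x * flow_val A X Q x)"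
proof -
  from assms(1) have finV: "finite V" and AV: "A \<subseteq> V \<times> V" and XV: "X \<subseteq> V" and rV: "r \<in> V"
    and acyc: "acyclic A"
    and src: "{v \<in> V. \<forall>u. (u, v) \<notin> A} = {r}" and snk: "{v \<in> V. \<forall>w. (v, w) \<notin> A} = X"
    and thpos: "\<forall>e\<in>A. \<theta> e > 0" and thsum: "\<forall>u\<in>V - X. (\<Sum>v\<in>out_nbrs A u. \<theta> (u, v)) = 1"
    and ompos: "\<forall>e\<in>A. \<omega> e > 0"
    unfolding marked_dag_def is_dag_def by auto
  have finA: "finite A" using finV AV by (meson finite_SigmaI finite_subset)
  have outV: "\<And>u. out_nbrs A u \<subseteq> V" using AV by (auto simp: out_nbrs_def)
  have finout: "\<And>u. finite (out_nbrs A u)" using outV finV finite_subset by blast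
  have out_eq: "\<And>u. out_nbrs A u = {v. v \<in> V \<and> (u, v) \<in> A}" using AV by (auto simp: out_nbrs_def)
  have in_eq: "\<And>v. in_nbrs A v = {u. u \<in> V \<and> (u, v) \<in> A}" using AV by (auto simp: in_nbrs_def)
  have Xno: "\<And>x. x \<in> X \<Longrightarrow> out_nbrs A x = {}" using snk by (auto simp: out_nbrs_def)
  have arc_nX: "\<And>u v. (u, v) \<in> A \<Longrightarrow> u \<in> V - X" using snk AV by blast
  have r_noin: "in_nbrs A r = {}" using src by (auto simp: in_nbrs_def)
  have th_le1: "\<theta> (u, v) \<le> 1" if e: "(u, v) \<in> A" for u v
  proof -
    have "\<theta> (u, v) \<le> (\<Sum>w\<in>out_nbrs A u. \<theta> (u, w))"
      by (rule member_le_sum) (use e thpos finout in \<open>auto simp: out_nbrs_def less_imp_le\<close>)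
    also have "\<dots> = 1" using thsum arc_nX[OF e] by auto
    finally show ?thesis .
  qed
  have eta_ge1: "eta \<theta> e \<ge> 1" if e: "e \<in> A" for e
  proof -
    obtain u v where uv: "e = (u, v)" by force
    have "\<theta> e > 0" "\<theta> e \<le> 1" using thpos e th_le1 uv by auto
    then have "1 / \<theta> e \<ge> 1" by simp
    then have "ln (1 / \<theta> e) \<ge> 0" by simp
    then show ?thesis by (simp add: eta_def)
  qed
  from assms(6) have Qnn: "\<And>e. e \<in> A \<Longrightarrow> Q e \<ge> 0"
    and cons: "\<forall>u\<in>V - (X \<union> {r}). (\<Sum>v\<in>out_nbrs A u. Q (u, v)) = (\<Sum>w\<in>in_nbrs A u. Q (w, u))"
    and Qprod: "\<And>u v. (u, v) \<in> A \<Longrightarrow> Q (u, v) = flow_val A X Q u * q (u, v)"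
    unfolding is_Lambda_def is_unit_flow_def is_flow_def by auto
  from assms(3) have qnn: "\<And>e. e \<in> A \<Longrightarrow> q e \<ge> 0"
    and qsum: "\<And>u. u \<in> V - X \<Longrightarrow> (\<Sum>v\<in>out_nbrs A u. q (u, v)) = 1"
    unfolding QD_def by auto
  from assms(5) have chX: "\<And>x. x \<in> X \<Longrightarrow> ch x = c x"
    and psim: "\<And>u. u \<in> V - X \<Longrightarrow> (\<lambda>v. p (u, v)) \<in> simplex_at A u"
    and popt: "\<And>u p'. u \<in> V - X \<Longrightarrow> p' \<in> simplex_at A u \<Longrightarrow>
             Dloc \<kappa> \<omega> \<theta> A u (\<lambda>v. p (u, v)) (\<lambda>v. q (u, v)) + (\<Sum>v\<in>out_nbrs A u. p (u, v) * ch v)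
             \<le> Dloc \<kappa> \<omega> \<theta> A u p' (\<lambda>v. q (u, v)) + (\<Sum>v\<in>out_nbrs A u. p' v * ch v)"
    and chdef: "\<And>u. u \<in> V - X \<Longrightarrow> ch u = (\<Sum>v\<in>out_nbrs A u. p (u, v) * ch v)"
    unfolding step_map_rel_def by auto
  have pnn: "\<And>u v. u \<in> V - X \<Longrightarrow> v \<in> out_nbrs A u \<Longrightarrow> p (u, v) \<ge> 0"
    using psim unfolding simplex_at_def by auto
  have wfc: "wf (A\<inverse>)" using finite_acyclic_wf_converse[OF finA acyc] .
  have ch_nn: "u \<in> V \<longrightarrow> ch u \<ge> 0" for u
  proof (induction u rule: wf_induct[OF wfc])
    case (1 u)
    show ?case
    proof
      assume uV: "u \<in> V"
      show "ch u \<ge> 0"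
      proof (cases "u \<in> X")
        case True then show ?thesis using chX assms(4) by auto
      next
        case False
        then have "ch u = (\<Sum>v\<in>out_nbrs A u. p (u, v) * ch v)" using chdef uV by auto
        also have "\<dots> \<ge> 0"
        proof (rule sum_nonneg)
          fix v assume v: "v \<in> out_nbrs A u"
          then have "(v, u) \<in> A\<inverse>" "v \<in> V" using outV by (auto simp: out_nbrs_def)
          then have "ch v \<ge> 0" using 1 by auto
          then show "p (u, v) * ch v \<ge> 0" using pnn[of u v] v uV False by auto
        qed
        finally show ?thesis .
      qed
    qed
  qed
  have delta_pos: "\<And>e. e \<in> A \<Longrightarrow> delta \<theta> e > 0"
    using thpos eta_ge1 unfolding delta_def by (smt (verit) divide_pos_pos)
  have ch_le: "ch u \<le> (\<Sum>v\<in>out_nbrs A u. q (u, v) * ch v)" if u: "u \<in> V - X" for u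
  proof -
    have qs: "(\<lambda>v. q (u, v)) \<in> simplex_at A u"
      using qnn qsum[OF u] unfolding simplex_at_def by (auto simp: out_nbrs_def)
    have D0: "Dloc \<kappa> \<omega> \<theta> A u (\<lambda>v. q (u, v)) (\<lambda>v. q (u, v)) = 0"
    proof -
      have "\<And>v. v \<in> out_nbrs A u \<Longrightarrow> q (u, v) + delta \<theta> (u, v) > 0"
        using qnn delta_pos by (fastforce simp: out_nbrs_def add_nonneg_pos)
      then have "(\<Sum>v\<in>out_nbrs A u.
      \<omega> (u, v) / eta \<theta> (u, v) *
      ((q (u, v) + delta \<theta> (u, v)) * ln ((q (u, v) + delta \<theta> (u, v)) / (q (u, v) + delta \<theta> (u, v))) + q (u, v) - q (u, v))) = 0"
        by (intro sum.neutral ballI) simp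
      then show ?thesis unfolding Dloc_def by simp
    qed
    have Dnn: "Dloc \<kappa> \<omega> \<theta> A u (\<lambda>v. p (u, v)) (\<lambda>v. q (u, v)) \<ge> 0"
      unfolding Dloc_def
    proof (intro mult_nonneg_nonneg sum_nonneg)
      show "0 \<le> 1 / \<kappa>" using assms(2) by simp
      fix v assume v: "v \<in> out_nbrs A u"
      then have e: "(u, v) \<in> A" by (simp add: out_nbrs_def)
      show "0 \<le> \<omega> (u, v) / eta \<theta> (u, v)" using ompos e eta_ge1[OF e] by (simp add: less_imp_le)
      have a: "p (u, v) + delta \<theta> (u, v) > 0" using pnn[OF u v] delta_pos[OF e] by simp
      have b: "q (u, v) + delta \<theta> (u, v) > 0" using qnn[OF e] delta_pos[OF e] by simp
      show "0 \<le> (p (u, v) + delta \<theta> (u, v)) * ln ((p (u, v) + delta \<theta> (u, v)) / (q (u, v) + delta \<theta> (u, v))) + q (u, v) - p (u, v)"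
        using xlog_ge[OF a b] by simp
    qed
    have "ch u = (\<Sum>v\<in>out_nbrs A u. p (u, v) * ch v)" using chdef u by auto
    also have "\<dots> \<le> Dloc \<kappa> \<omega> \<theta> A u (\<lambda>v. p (u, v)) (\<lambda>v. q (u, v)) + (\<Sum>v\<in>out_nbrs A u. p (u, v) * ch v)"
      using Dnn by simp
    also have "\<dots> \<le> (\<Sum>v\<in>out_nbrs A u. q (u, v) * ch v)"
      using popt[OF u qs] D0 by simp
    finally show ?thesis .
  qed
  define P where "P v = {\<gamma>. apath A \<gamma> \<and> hd \<gamma> = r \<and> last \<gamma> = v}" for v
  have Pfin: "finite (P v)" for v
    by (rule finite_subset[OF _ apath_finite[OF finV AV acyc, of "\<lambda>\<gamma>. hd \<gamma> = r \<and> last \<gamma> = v"]])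
       (use rV in \<open>auto simp: P_def\<close>)
  have wfA: "wf A" using finite_acyclic_wf[OF finA acyc] .
  have Pne: "v \<in> V \<longrightarrow> P v \<noteq> {}" for v
  proof (induction v rule: wf_induct[OF wfA])
    case (1 v)
    show ?case
    proof
      assume vV: "v \<in> V"
      show "P v \<noteq> {}"
      proof (cases "v = r")
        case True
        then have "[r] \<in> P v" by (simp add: P_def apath_def)
        then show ?thesis by auto
      next
        case False
        then obtain u where uv: "(u, v) \<in> A" using src vV by auto
        then have "u \<in> V" using AV by auto
        then obtain \<gamma> where "\<gamma> \<in> P u" using 1 uv by auto
        then have "\<gamma> @ [v] \<in> P v" using uv apath_snoc[of A \<gamma> v]
          by (auto simp: P_def apath_def hd_append)
        then show ?thesis by auto
      qed
    qed
  qed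
  have wt_nn: "wt (eta \<theta>) \<gamma> \<ge> 0" if "apath A \<gamma>" for \<gamma>
    unfolding wt_def
  proof (rule sum_nonneg)
    fix i assume "i \<in> {..<length \<gamma> - 1}"
    then have "(\<gamma> ! i, \<gamma> ! Suc i) \<in> A" using that by (auto simp: apath_def)
    then show "eta \<theta> (\<gamma> ! i, \<gamma> ! Suc i) \<ge> 0" using eta_ge1 by force
  qed
  define L where "L v = Max (wt (eta \<theta>) ` P v)" for v
  have L_ge: "\<And>v \<gamma>. \<gamma> \<in> P v \<Longrightarrow> wt (eta \<theta>) \<gamma> \<le> L v"
    unfolding L_def using Pfin by (auto intro: Max_ge)
  have L_in: "\<And>v. v \<in> V \<Longrightarrow> \<exists>\<gamma>\<in>P v. L v = wt (eta \<theta>) \<gamma>"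
  proof -
    fix v assume "v \<in> V"
    then have "wt (eta \<theta>) ` P v \<noteq> {}" using Pne by auto
    then have "L v \<in> wt (eta \<theta>) ` P v" unfolding L_def using Pfin by (intro Max_in) auto
    then show "\<exists>\<gamma>\<in>P v. L v = wt (eta \<theta>) \<gamma>" by auto
  qed
  have L_nn: "L v \<ge> 0" if "v \<in> V" for v
    using L_in[OF that] wt_nn by (auto simp: P_def)
  have L_arc: "L u + eta \<theta> (u, v) \<le> L v" if uv: "(u, v) \<in> A" for u v
  proof -
    have "u \<in> V" using uv AV by auto
    then obtain \<gamma> where g: "\<gamma> \<in> P u" "L u = wt (eta \<theta>) \<gamma>" using L_in by blast
    then have ne: "\<gamma> \<noteq> []" by (auto simp: P_def apath_def)
    have "\<gamma> @ [v] \<in> P v" using g uv apath_snoc[of A \<gamma> v]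
      by (auto simp: P_def apath_def hd_append)
    then have "wt (eta \<theta>) (\<gamma> @ [v]) \<le> L v" by (rule L_ge)
    then show ?thesis using g wt_snoc[OF ne] by (auto simp: P_def)
  qed
  define D where "D = real (Delta0 A X r) + DeltaI A X r \<theta>"
  have rp_fin: "finite (rpaths A X r)"
    by (rule finite_subset[OF _ apath_finite[OF finV AV acyc, of "\<lambda>\<gamma>. hd \<gamma> = r \<and> last \<gamma> \<in> X"]])
       (use rV in \<open>auto simp: rpaths_def apath_def\<close>)
  have L_X: "L x \<le> D" if x: "x \<in> X" for x
  proof -
    obtain \<gamma> where g: "\<gamma> \<in> P x" "L x = wt (eta \<theta>) \<gamma>" using L_in x XV by blast
    have grp: "\<gamma> \<in> rpaths A X r" using g x by (auto simp: P_def rpaths_def apath_def)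
    have arcs: "\<And>i. i < length \<gamma> - 1 \<Longrightarrow> (\<gamma> ! i, \<gamma> ! Suc i) \<in> A" using g by (auto simp: P_def apath_def)
    have "wt (eta \<theta>) \<gamma> = (\<Sum>i<length \<gamma> - 1. 1 + (- ln (\<theta> (\<gamma> ! i, \<gamma> ! Suc i))))"
      unfolding wt_def eta_def
    proof (rule sum.cong[OF refl])
      fix i assume "i \<in> {..<length \<gamma> - 1}"
      then have "\<theta> (\<gamma> ! i, \<gamma> ! Suc i) > 0" using arcs thpos by auto
      then show "1 + ln (1 / \<theta> (\<gamma> ! i, \<gamma> ! Suc i)) = 1 + - ln (\<theta> (\<gamma> ! i, \<gamma> ! Suc i))"
        by (simp add: ln_div)
    qed
    also have "\<dots> = real (length \<gamma> - 1) - (\<Sum>i<length \<gamma> - 1. ln (\<theta> (\<gamma> ! i, \<gamma> ! Suc i)))"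
      by (simp add: sum_subtractf)
    also have "(\<Sum>i<length \<gamma> - 1. ln (\<theta> (\<gamma> ! i, \<gamma> ! Suc i))) = ln (path_theta \<theta> \<gamma>)"
      unfolding path_theta_def using arcs thpos by (subst ln_prod) force+
    also have "ln (path_theta \<theta> \<gamma>) = - ln (1 / path_theta \<theta> \<gamma>)"
    proof -
      have "path_theta \<theta> \<gamma> > 0" unfolding path_theta_def using arcs thpos by (intro prod_pos) force
      then show ?thesis by (simp add: ln_div)
    qed
    finally have w: "wt (eta \<theta>) \<gamma> = real (length \<gamma> - 1) + ln (1 / path_theta \<theta> \<gamma>)" by simp
    have "length \<gamma> - 1 \<le> Delta0 A X r" unfolding Delta0_def using rp_fin grp by (auto intro: Max_ge)
    moreover have "ln (1 / path_theta \<theta> \<gamma>) \<le> DeltaI A X r \<theta>" unfolding DeltaI_def using rp_fin grp by (auto intro: Max_ge)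
    ultimately show ?thesis using g w unfolding D_def by linarith
  qed
  define inQ where "inQ v = (\<Sum>w\<in>in_nbrs A v. Q (w, v))" for v
  have A_Sig: "A = Sigma V (out_nbrs A)" using AV by (auto simp: out_nbrs_def)
  have step1: "(\<Sum>e\<in>A. eta \<theta> e * Q e * ch (snd e))
      \<le> (\<Sum>e\<in>A. L (snd e) * Q e * ch (snd e)) - (\<Sum>e\<in>A. L (fst e) * Q e * ch (snd e))"
  proof -
    have "(\<Sum>e\<in>A. eta \<theta> e * Q e * ch (snd e)) \<le> (\<Sum>e\<in>A. (L (snd e) - L (fst e)) * Q e * ch (snd e))"
    proof (rule sum_mono)
      fix e assume e: "e \<in> A"
      obtain u v where uv: "e = (u, v)" by force
      have "Q e * ch (snd e) \<ge> 0" using Qnn[OF e] ch_nn[of v] e uv AV by auto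
      moreover have "eta \<theta> e \<le> L (snd e) - L (fst e)" using L_arc[of u v] e uv by auto
      ultimately show "eta \<theta> e * Q e * ch (snd e) \<le> (L (snd e) - L (fst e)) * Q e * ch (snd e)"
        by (metis mult.assoc mult_right_mono)
    qed
    also have "\<dots> = (\<Sum>e\<in>A. L (snd e) * Q e * ch (snd e)) - (\<Sum>e\<in>A. L (fst e) * Q e * ch (snd e))"
      by (simp add: sum_subtractf left_diff_distrib)
    finally show ?thesis .
  qed
  have T2: "(\<Sum>e\<in>A. L (fst e) * Q e * ch (snd e)) = (\<Sum>u\<in>V. \<Sum>v\<in>out_nbrs A u. L u * Q (u, v) * ch v)"
    by (subst A_Sig, subst sum.Sigma[OF finV]) (auto simp: finout case_prod_beta)
  have T1: "(\<Sum>e\<in>A. L (snd e) * Q e * ch (snd e)) = (\<Sum>v\<in>V. L v * ch v * inQ v)"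
  proof -
    have "(\<Sum>e\<in>A. L (snd e) * Q e * ch (snd e)) = (\<Sum>u\<in>V. \<Sum>v\<in>out_nbrs A u. L v * Q (u, v) * ch v)"
      by (subst A_Sig, subst sum.Sigma[OF finV]) (auto simp: finout case_prod_beta)
    also have "\<dots> = (\<Sum>v\<in>V. \<Sum>u\<in>in_nbrs A v. L v * Q (u, v) * ch v)"
      unfolding out_eq in_eq by (rule sum.swap_restrict[OF finV finV])
    also have "\<dots> = (\<Sum>v\<in>V. L v * ch v * inQ v)"
      unfolding inQ_def by (simp add: sum_distrib_left mult_ac)
    finally show ?thesis .
  qed
  have loc: "L u * ch u * inQ u \<le> (\<Sum>v\<in>out_nbrs A u. L u * Q (u, v) * ch v)" if u: "u \<in> V - X" for u
  proof -
    have Fu: "flow_val A X Q u = (\<Sum>v\<in>out_nbrs A u. Q (u, v))" using u by (simp add: flow_val_def)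
    have Fnn: "flow_val A X Q u \<ge> 0" unfolding Fu by (rule sum_nonneg) (auto simp: out_nbrs_def Qnn)
    have inle: "inQ u \<le> flow_val A X Q u"
    proof (cases "u = r")
      case True then show ?thesis using Fnn r_noin by (simp add: inQ_def)
    next
      case False then show ?thesis using cons u Fu by (simp add: inQ_def)
    qed
    have Lc: "L u * ch u \<ge> 0" using L_nn ch_nn u by auto
    have "L u * ch u * inQ u \<le> L u * ch u * flow_val A X Q u" using inle Lc by (rule mult_left_mono)
    also have "\<dots> \<le> L u * flow_val A X Q u * (\<Sum>v\<in>out_nbrs A u. q (u, v) * ch v)"
    proof -
      have "L u * flow_val A X Q u \<ge> 0" using L_nn[of u] Fnn u by auto
      then have "(L u * flow_val A X Q u) * ch u \<le> (L u * flow_val A X Q u) * (\<Sum>v\<in>out_nbrs A u. q (u, v) * ch v)"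
        using ch_le[OF u] mult_left_mono by blast
      then show ?thesis by (simp add: mult_ac)
    qed
    also have "\<dots> = (\<Sum>v\<in>out_nbrs A u. L u * Q (u, v) * ch v)"
      unfolding sum_distrib_left
    proof (rule sum.cong[OF refl])
      fix v assume "v \<in> out_nbrs A u"
      then have "Q (u, v) = flow_val A X Q u * q (u, v)" using Qprod by (simp add: out_nbrs_def)
      then show "L u * flow_val A X Q u * (q (u, v) * ch v) = L u * Q (u, v) * ch v" by simp
    qed
    finally show ?thesis .
  qed
  have VX: "V = X \<union> (V - X)" "X \<inter> (V - X) = {}" using XV by auto
  have finX: "finite X" using XV finV finite_subset by blast
  have T1': "(\<Sum>v\<in>V. L v * ch v * inQ v) = (\<Sum>x\<in>X. L x * c x * inQ x) + (\<Sum>v\<in>V-X. L v * ch v * inQ v)"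
  proof -
    have "(\<Sum>v\<in>V. L v * ch v * inQ v) = (\<Sum>x\<in>X. L x * ch x * inQ x) + (\<Sum>v\<in>V-X. L v * ch v * inQ v)"
      using sum.union_disjoint[OF finX _ VX(2), where g="\<lambda>v. L v * ch v * inQ v"] finV VX(1) by simp
    moreover have "(\<Sum>x\<in>X. L x * ch x * inQ x) = (\<Sum>x\<in>X. L x * c x * inQ x)"
      using chX by (intro sum.cong) auto
    ultimately show ?thesis by simp
  qed
  have T2': "(\<Sum>u\<in>V. \<Sum>v\<in>out_nbrs A u. L u * Q (u, v) * ch v) = (\<Sum>u\<in>V-X. \<Sum>v\<in>out_nbrs A u. L u * Q (u, v) * ch v)"
    by (rule sum.mono_neutral_right[OF finV]) (auto simp: Xno)
  have "(\<Sum>e\<in>A. eta \<theta> e * Q e * ch (snd e)) \<le> (\<Sum>x\<in>X. L x * c x * inQ x)"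
  proof -
    have "(\<Sum>v\<in>V-X. L v * ch v * inQ v) \<le> (\<Sum>u\<in>V-X. \<Sum>v\<in>out_nbrs A u. L u * Q (u, v) * ch v)"
      by (rule sum_mono) (rule loc)
    then show ?thesis using step1 T1 T2 T1' T2' by linarith
  qed
  also have "\<dots> \<le> (\<Sum>x\<in>X. D * (c x * flow_val A X Q x))"
  proof (rule sum_mono)
    fix x assume x: "x \<in> X"
    have "inQ x \<ge> 0" unfolding inQ_def by (rule sum_nonneg) (auto simp: in_nbrs_def Qnn)
    then have "c x * inQ x \<ge> 0" using assms(4) x by auto
    then have "L x * (c x * inQ x) \<le> D * (c x * inQ x)" using L_X[OF x] mult_right_mono by blast
    moreover have "flow_val A X Q x = inQ x" using x by (simp add: flow_val_def inQ_def)
    ultimately show "L x * c x * inQ x \<le> D * (c x * flow_val A X Q x)" by (simp add: mult.assoc)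
  qed
  also have "\<dots> = D * (\<Sum>x\<in>X. c x * flow_val A X Q x)" by (simp add: sum_distrib_left)
  finally show ?thesis unfolding D_def .
qed

end
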